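(* For every integer $n>2$ there exist an integer $N\ge n$ and a probability vector $p=(p_1,\dots,p_N)$ with all $p_k>0$ such that $D(p)<0$.
   Context: For $N\ge2$ and a probability vector $p=(p_1,\dots,p_N)$ with all $p_k>0$, $$D(p)=2\log N+\frac1N\sum_{k=1}^N(\log p_k)^2-\frac1{N^2}\Big(\sum_{k=1}^N\log p_k\Big)^2+\frac2N\sum_{k=1}^N\log p_k,$$ which equals $\lim_{\alpha\to0+}\frac{\partial^2}{\partial\alpha^2}\mathcal H_\alpha(p)$ for the Rényi entropy $\mathcal H_\alpha(p)=\frac1{1-\alpha}\log\sum_k p_k^\alpha$. Logarithms are natural. *)

theory Defs
  imports Complex_Main
begin

text \<open>Probability vectors of length N, represented as functions on the index set {0..<N}
  (the paper's p_1..p_N correspond to p 0 .. p (N-1)).\<close>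
definition prob_vector :: "nat \<Rightarrow> (nat \<Rightarrow> real) \<Rightarrow> bool" where
  "prob_vector N p \<longleftrightarrow> (\<forall>k<N. p k > 0) \<and> (\<Sum>k<N. p k) = 1"

text \<open>The second derivative of the Renyi entropy at alpha = 0+, as given explicitly.\<close>
definition D :: "nat \<Rightarrow> (nat \<Rightarrow> real) \<Rightarrow> real" where
  "D N p = 2 * ln (real N) + (1 / real N) * (\<Sum>k<N. (ln (p k))^2)
           - (1 / (real N)^2) * (\<Sum>k<N. ln (p k))^2
           + (2 / real N) * (\<Sum>k<N. ln (p k))"

end

theory Submission
  imports Defs
begin

lemma lnbound: "(N::real) \<ge> 10 \<Longrightarrow> 2 * ln N < N - 1"
proof -
  assume h: "N \<ge> 10"
  define s where "s = sqrt N"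
  have s2: "s^2 = N" using h by (simp add: s_def)
  have "sqrt 9 < sqrt N" using h by (subst real_sqrt_less_iff) simp
  then have s3: "s > 3" by (simp add: s_def)
  have "ln (s^2) = 2 * ln s" using s3 by (simp add: ln_realpow)
  then have "ln N = 2 * ln s" using s2 by simp
  moreover have "ln s \<le> s - 1" using s3 by (intro ln_le_minus_one) simp
  ultimately have "2 * ln N \<le> 4 * (s - 1)" by simp
  also have "... < s^2 - 1"
  proof -
    have "(s-1)*(s-3) > 0" using s3 by (intro mult_pos_pos) auto
    then show ?thesis by (simp add: power2_eq_square algebra_simps)
  qed
  finally show ?thesis using s2 by simp
qed

lemma alg: fixes M a L :: real assumes "M \<ge> 0"
  shows "2 * L + (1 / (M+1)) * (a^2 + M * (a - (M+1))^2)
           - (1 / (M+1)^2) * (a + M * (a - (M+1)))^2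
           + (2 / (M+1)) * (a + M * (a - (M+1))) = 2 * L - M + 2 * a"
proof -
  have e1: "a + M * (a - (M+1)) = (M+1) * (a - M)" by (simp add: algebra_simps)
  have e2: "(1 / (M+1)^2) * ((M+1) * (a - M))^2 = (a - M)^2"
    using assms by (simp add: power_mult_distrib)
  have e3: "(2 / (M+1)) * ((M+1) * (a - M)) = 2 * (a - M)" using assms by simp
  have e4: "a^2 + M * (a - (M+1))^2 = (M+1) * (a^2 - 2*a*M + M*(M+1))"
    by (simp add: algebra_simps power2_eq_square)
  have e5: "(1 / (M+1)) * ((M+1) * (a^2 - 2*a*M + M*(M+1))) = a^2 - 2*a*M + M*(M+1)"
    using assms by simp
  show ?thesis unfolding e1 e2 e3 e4 e5 by (simp add: algebra_simps power2_eq_square)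
qed

theorem mainTheorem4:
  fixes n :: int
  assumes "n > 2"
  shows "\<exists>N::nat. int N \<ge> n \<and> (\<exists>p. prob_vector N p \<and> D N p < 0)"
proof -
  define m :: nat where "m = nat n + 10"
  define N where "N = Suc m"
  define c :: real where "c = 1 + real m * exp (- real N)"
  have cpos: "c \<ge> 1" unfolding c_def by simp
  define a where "a = - ln c"
  have a0: "a \<le> 0" using cpos unfolding a_def by simp
  define p :: "nat \<Rightarrow> real" where "p k = (if k = 0 then 1 / c else exp (- real N) / c)" for k
  have pv: "prob_vector N p"
    unfolding prob_vector_def N_def
  proof
    show "\<forall>k<Suc m. 0 < p k" using cpos by (simp add: p_def)
    have "(\<Sum>k<Suc m. p k) = p 0 + (\<Sum>k<m. p (Suc k))" by (subst sum.lessThan_Suc_shift) simp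
    also have "... = 1/c + real m * exp (- real N) / c" by (simp add: p_def)
    also have "... = (1 + real m * exp (- real N)) / c" by (simp add: add_divide_distrib)
    also have "... = 1" using cpos by (simp add: c_def[symmetric])
    finally show "(\<Sum>k<Suc m. p k) = 1" .
  qed
  have l0: "ln (p 0) = a" using cpos by (simp add: p_def a_def ln_div)
  have ls: "ln (p (Suc k)) = a - real N" for k using cpos by (simp add: p_def a_def ln_div)
  have S1: "(\<Sum>k<N. ln (p k)) = a + real m * (a - real N)"
    unfolding N_def by (subst sum.lessThan_Suc_shift) (simp add: l0 ls N_def)
  have S2: "(\<Sum>k<N. (ln (p k))^2) = a^2 + real m * (a - real N)^2"
    unfolding N_def by (subst sum.lessThan_Suc_shift) (simp add: l0 ls N_def)
  have RN: "real N = real m + 1" by (simp add: N_def)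
  have "D N p = 2 * ln (real N) - real m + 2 * a"
    unfolding D_def S1 S2 RN by (rule alg) simp
  moreover have "2 * ln (real N) < real N - 1" by (rule lnbound) (simp add: N_def m_def)
  ultimately have "D N p < 0" using a0 RN by simp
  moreover have "int N \<ge> n" using assms by (simp add: N_def m_def)
  ultimately show ?thesis using pv by blast
qed

end
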